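(* Let $f(z)$ and $g(z)$ be two non-constant entire functions with ${\rm Aut}(f)\subseteq{\rm Aut}(g)$. Then $f'$ divides $g'$ in the algebra of entire functions, i.e. there is an entire function $H$ with $g'(z)=H(z)f'(z)$. Moreover, there exists a function $G(w,z)$, entire in $w$ and holomorphic in $z\in\mathbb{C}-g^{-1}(g(0))-f^{-1}(f(0))$, such that $g(w)-g(z)=(f(w)-f(z))\cdot G(w,z)$.
   Context: For a non-constant entire function $f$, an automorphic function of $f$ is a (generally multivalued) analytic function $\phi$, or a branch of one on a domain, satisfying $f(\phi(z))=f(z)$; ${\rm Aut}(f)$ is the set (group under composition) of all of them. ${\rm Aut}(f)\subseteq{\rm Aut}(g)$ means every automorphic function of $f$ is an automorphic function of $g$. *)

theory Defs
  imports "HOL-Complex_Analysis.Complex_Analysis"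
begin

text \<open>A branch of an automorphic function of f on a domain U (nonempty open connected set):
  an analytic phi on U with f (phi z) = f z for all z in U.\<close>
definition aut_branch :: "(complex \<Rightarrow> complex) \<Rightarrow> complex set \<Rightarrow> (complex \<Rightarrow> complex) \<Rightarrow> bool" where
  "aut_branch f U \<phi> \<longleftrightarrow> open U \<and> connected U \<and> U \<noteq> {} \<and> \<phi> holomorphic_on U \<and>
     (\<forall>z\<in>U. f (\<phi> z) = f z)"

definition Aut_subset :: "(complex \<Rightarrow> complex) \<Rightarrow> (complex \<Rightarrow> complex) \<Rightarrow> bool" where
  "Aut_subset f g \<longleftrightarrow> (\<forall>U \<phi>. aut_branch f U \<phi> \<longrightarrow> aut_branch g U \<phi>)"

end

theory Submission
  imports Defs
begin

lemma ent_open_image: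
  assumes "f holomorphic_on UNIV" "\<not> (\<exists>c. \<forall>z. f z = (c::complex))" "open U"
  shows "open (f ` U)"
proof (rule open_mapping_thm[OF assms(1) open_UNIV connected_UNIV assms(3)])
  show "U \<subseteq> UNIV" by simp
  show "\<not> f constant_on UNIV" using assms(2) unfolding constant_on_def by auto
qed

lemma local_inv:
  assumes hf: "f holomorphic_on UNIV" and nc: "\<not> (\<exists>c. \<forall>z. f z = (c::complex))"
    and d: "deriv f q \<noteq> 0"
  shows "\<exists>\<psi> W. open W \<and> f q \<in> W \<and> \<psi> holomorphic_on W \<and> (\<forall>y\<in>W. f (\<psi> y) = y) \<and> \<psi> (f q) = q"
proof -
  obtain r where r: "r > 0" "inj_on f (ball q r)"
    using has_complex_derivative_locally_injective[OF hf _ open_UNIV d] by blast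
  obtain \<psi> where p: "\<psi> holomorphic_on (f ` ball q r)" "\<And>z. z \<in> ball q r \<Longrightarrow> \<psi> (f z) = z"
    using holomorphic_has_inverse[OF holomorphic_on_subset[OF hf] open_ball r(2)] by blast
  have "open (f ` ball q r)" using ent_open_image[OF hf nc] by simp
  moreover have "f q \<in> f ` ball q r" using r by simp
  moreover have "\<forall>y\<in>f ` ball q r. f (\<psi> y) = y" using p(2) by auto
  moreover have "\<psi> (f q) = q" using p(2) r by simp
  ultimately show ?thesis using p(1) by blast
qed

lemma fiber_reg:
  assumes hf: "f holomorphic_on UNIV" and nc: "\<not> (\<exists>c. \<forall>z. f z = (c::complex))"
    and A: "Aut_subset f g" and d: "deriv f q \<noteq> 0" and e: "f p = f q"
  shows "g p = g q"
proof -
  obtain \<psi> W where W: "open W" "f q \<in> W" "\<psi> holomorphic_on W" "\<forall>y\<in>W. f (\<psi> y) = y" "\<psi> (f q) = q"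
    using local_inv[OF hf nc d] by blast
  have "open (f -` W)"
    using W(1) holomorphic_on_imp_continuous_on[OF hf] by (simp add: continuous_on_open_vimage)
  then obtain \<epsilon> where eps: "\<epsilon> > 0" "ball p \<epsilon> \<subseteq> f -` W"
    using W(2) e by (metis open_contains_ball vimageI2)
  have "aut_branch f (ball p \<epsilon>) (\<psi> \<circ> f)"
    unfolding aut_branch_def
  proof (intro conjI ballI)
    show "(\<psi> \<circ> f) holomorphic_on ball p \<epsilon>"
      by (rule holomorphic_on_compose_gen[OF holomorphic_on_subset[OF hf] W(3)]) (use eps in auto)
    fix z assume "z \<in> ball p \<epsilon>"
    then show "f ((\<psi> \<circ> f) z) = f z" using eps W(4) by auto
  qed (use eps in auto)
  then have "aut_branch g (ball p \<epsilon>) (\<psi> \<circ> f)" using A unfolding Aut_subset_def by blast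
  then have "g ((\<psi> \<circ> f) p) = g p" unfolding aut_branch_def using eps by auto
  then show ?thesis using e W(5) by simp
qed

lemma noncrit_near:
  assumes hf: "f holomorphic_on UNIV" and nc: "\<not> (\<exists>c. \<forall>z. f z = (c::complex))"
    and d: "d > 0"
  shows "\<exists>z\<in>ball b d. deriv f z \<noteq> 0"
proof (rule ccontr)
  assume "\<not> ?thesis"
  then have z: "\<And>z. z \<in> ball b d \<Longrightarrow> deriv f z = 0" by auto
  have "\<exists>c. \<forall>x\<in>ball b d. f x = c"
  proof (rule has_field_derivative_zero_constant)
    fix x assume "x \<in> ball b d"
    then show "(f has_field_derivative 0) (at x within ball b d)"
      using z[of x] hf
      by (metis DERIV_deriv_iff_field_differentiable UNIV_I has_field_derivative_at_within
          holomorphic_on_imp_differentiable_at open_UNIV)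
  qed simp
  then obtain c where c: "\<forall>x\<in>ball b d. f x = c" by blast
  have "\<forall>w. f w - c = 0"
  proof
    fix w
    show "f w - c = 0"
      by (rule analytic_continuation[of "\<lambda>z. f z - c" UNIV "ball b d" b])
        (use hf c d in \<open>auto intro!: holomorphic_intros simp: islimpt_ball\<close>)
  qed
  then show False using nc by auto
qed


lemma fiber:
  assumes hf: "f holomorphic_on UNIV" and nc: "\<not> (\<exists>c. \<forall>z. f z = (c::complex))"
    and hg: "g holomorphic_on UNIV"
    and A: "Aut_subset f g" and e: "f a = f b"
  shows "g a = (g b :: complex)"
proof -
  have cg: "continuous_on UNIV g" using hg holomorphic_on_imp_continuous_on by blast
  have cf: "continuous_on UNIV f" using hf holomorphic_on_imp_continuous_on by blast
  have "dist (g a) (g b) < \<epsilon>" if ep: "\<epsilon> > 0" for \<epsilon>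
  proof -
    obtain d1 where d1: "d1 > 0" "\<And>x. dist x a < d1 \<Longrightarrow> dist (g x) (g a) < \<epsilon>/2"
      using cg ep unfolding continuous_on_iff by (meson UNIV_I half_gt_zero)
    have "open (f ` ball a d1)" using ent_open_image[OF hf nc] by simp
    moreover have "f a \<in> f ` ball a d1" using d1 by simp
    ultimately obtain \<eta> where eta: "\<eta> > 0" "ball (f a) \<eta> \<subseteq> f ` ball a d1"
      using open_contains_ball by blast
    obtain d2 where d2: "d2 > 0" "\<And>x. dist x b < d2 \<Longrightarrow> dist (g x) (g b) < \<epsilon>/2"
      using cg ep unfolding continuous_on_iff by (meson UNIV_I half_gt_zero)
    obtain d3 where d3: "d3 > 0" "\<And>x. dist x b < d3 \<Longrightarrow> dist (f x) (f b) < \<eta>"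
      using cf eta unfolding continuous_on_iff by (meson UNIV_I)
    obtain z where z: "z \<in> ball b (min d2 d3)" "deriv f z \<noteq> 0"
      using noncrit_near[OF hf nc, of "min d2 d3" b] d2 d3 by auto
    have "dist (f z) (f a) < \<eta>" using d3(2)[of z] z e by (simp add: dist_commute)
    then have "f z \<in> f ` ball a d1" using eta by (auto simp: dist_commute)
    then obtain w where w: "w \<in> ball a d1" "f w = f z" by auto
    have "g w = g z" by (rule fiber_reg[OF hf nc A z(2) w(2)])
    have "dist (g a) (g b) \<le> dist (g w) (g a) + dist (g z) (g b)"
      using \<open>g w = g z\<close> dist_triangle[of "g a" "g b" "g w"] by (simp add: dist_commute)
    also have "\<dots> < \<epsilon>/2 + \<epsilon>/2"
      using d1(2)[of w] d2(2)[of z] w z by (auto simp: dist_commute)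
    finally show ?thesis by simp
  qed
  then have "\<not> dist (g a) (g b) > 0" by blast
  then show ?thesis by simp
qed


definition Nf :: "(complex \<Rightarrow> complex) \<Rightarrow> (complex \<Rightarrow> complex) \<Rightarrow> complex \<Rightarrow> complex" where
  "Nf f g u = g (SOME x. f x = u)"

lemma Nf_eq:
  assumes hf: "f holomorphic_on UNIV" and nc: "\<not> (\<exists>c. \<forall>z. f z = (c::complex))"
    and hg: "g holomorphic_on UNIV" and A: "Aut_subset f g"
  shows "Nf f g (f x) = g x"
proof -
  have "f (SOME y. f y = f x) = f x" by (rule someI) simp
  then show ?thesis unfolding Nf_def by (rule fiber[OF hf nc hg A])
qed

lemma Nf_diff_reg:
  assumes hf: "f holomorphic_on UNIV" and nc: "\<not> (\<exists>c. \<forall>z. f z = (c::complex))"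
    and hg: "g holomorphic_on UNIV" and A: "Aut_subset f g" and d: "deriv f q \<noteq> 0"
  shows "Nf f g field_differentiable at (f q)"
proof -
  obtain \<psi> W where W: "open W" "f q \<in> W" "\<psi> holomorphic_on W" "\<forall>y\<in>W. f (\<psi> y) = y" "\<psi> (f q) = q"
    using local_inv[OF hf nc d] by blast
  have "(g \<circ> \<psi>) holomorphic_on W"
    by (rule holomorphic_on_compose_gen[OF W(3) hg]) simp
  moreover have "\<And>y. y \<in> W \<Longrightarrow> (g \<circ> \<psi>) y = Nf f g y"
    using Nf_eq[OF hf nc hg A] W(4) by (metis comp_apply)
  ultimately have "Nf f g holomorphic_on W" by (rule holomorphic_transform)
  then show ?thesis using W(1,2) holomorphic_on_imp_differentiable_at by blast
qed

lemma Nf_cont: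
  assumes hf: "f holomorphic_on UNIV" and nc: "\<not> (\<exists>c. \<forall>z. f z = (c::complex))"
    and hg: "g holomorphic_on UNIV" and A: "Aut_subset f g"
  shows "isCont (Nf f g) (f x)"
proof -
  have cg: "continuous_on UNIV g" using hg holomorphic_on_imp_continuous_on by blast
  have "\<exists>\<eta>>0. \<forall>u. dist u (f x) < \<eta> \<longrightarrow> dist (Nf f g u) (Nf f g (f x)) < \<epsilon>" if ep: "\<epsilon> > 0" for \<epsilon>
  proof -
    obtain d1 where d1: "d1 > 0" "\<And>y. dist y x < d1 \<Longrightarrow> dist (g y) (g x) < \<epsilon>"
      using cg ep unfolding continuous_on_iff by (meson UNIV_I)
    have "open (f ` ball x d1)" using ent_open_image[OF hf nc] by simp
    moreover have "f x \<in> f ` ball x d1" using d1 by simp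
    ultimately obtain \<eta> where eta: "\<eta> > 0" "ball (f x) \<eta> \<subseteq> f ` ball x d1"
      using open_contains_ball by blast
    have "dist (Nf f g u) (Nf f g (f x)) < \<epsilon>" if "dist u (f x) < \<eta>" for u
    proof -
      have "u \<in> f ` ball x d1" using that eta by (auto simp: dist_commute)
      then obtain y where y: "y \<in> ball x d1" "u = f y" by auto
      show ?thesis using y d1(2)[of y] Nf_eq[OF hf nc hg A] by (simp add: dist_commute)
    qed
    then show ?thesis using eta by blast
  qed
  then show ?thesis unfolding continuous_at_eps_delta by blast
qed

lemma Nf_hol:
  assumes hf: "f holomorphic_on UNIV" and nc: "\<not> (\<exists>c. \<forall>z. f z = (c::complex))"
    and hg: "g holomorphic_on UNIV" and A: "Aut_subset f g"
  shows "Nf f g field_differentiable at (f p)"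
proof (cases "deriv f p = 0")
  case False
  then show ?thesis using Nf_diff_reg[OF hf nc hg A] by blast
next
  case True
  obtain \<beta> where \<beta>: "deriv f \<beta> \<noteq> 0" using noncrit_near[OF hf nc, of 1 0] by auto
  have hd: "deriv f holomorphic_on UNIV" using hf by (simp add: holomorphic_deriv)
  obtain r where r: "0 < r" "\<And>z. z \<in> ball p r - {p} \<Longrightarrow> deriv f z \<noteq> 0"
    using isolated_zeros[OF hd open_UNIV connected_UNIV _ True _ \<beta>] by blast
  let ?V = "f ` ball p r"
  have oV: "open ?V" using ent_open_image[OF hf nc] by simp
  have "Nf f g holomorphic_on ?V"
  proof (rule no_isolated_singularity[where K = "{f p}"])
    show "continuous_on ?V (Nf f g)"
      using Nf_cont[OF hf nc hg A] by (auto intro!: continuous_at_imp_continuous_on)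
    show "Nf f g holomorphic_on (?V - {f p})"
      unfolding holomorphic_on_def
    proof
      fix u assume "u \<in> ?V - {f p}"
      then obtain w where w: "w \<in> ball p r" "u = f w" "f w \<noteq> f p" by auto
      then have "w \<noteq> p" by auto
      then have "deriv f w \<noteq> 0" using r w by auto
      then have "Nf f g field_differentiable at u" using Nf_diff_reg[OF hf nc hg A] w by blast
      then show "Nf f g field_differentiable at u within (?V - {f p})"
        by (rule field_differentiable_at_within)
    qed
  qed (use oV in auto)
  moreover have "f p \<in> ?V" using r by simp
  ultimately show ?thesis using oV holomorphic_on_imp_differentiable_at by blast
qed


theorem proposition5:
  fixes f g :: "complex \<Rightarrow> complex"
  assumes "f holomorphic_on UNIV" and "g holomorphic_on UNIV"
    and "\<not> (\<exists>c. \<forall>z. f z = c)" and "\<not> (\<exists>c. \<forall>z. g z = c)"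
    and "Aut_subset f g"
  shows "(\<exists>H. H holomorphic_on UNIV \<and> (\<forall>z. deriv g z = H z * deriv f z))
    \<and> (\<exists>G :: complex \<Rightarrow> complex \<Rightarrow> complex.
          (\<forall>z \<in> UNIV - g -` {g 0} - f -` {f 0}. (\<lambda>w. G w z) holomorphic_on UNIV)
        \<and> (\<forall>w. (\<lambda>z. G w z) holomorphic_on (UNIV - g -` {g 0} - f -` {f 0}))
        \<and> (\<forall>w. \<forall>z \<in> UNIV - g -` {g 0} - f -` {f 0}. g w - g z = (f w - f z) * G w z))"
proof -
  note hf = assms(1) and hg = assms(2) and nc = assms(3) and A = assms(5)
  define N where "N = Nf f g"
  define R where "R = range f"
  have oR: "open R" unfolding R_def using ent_open_image[OF hf nc, of UNIV] by simp
  have Neq: "\<And>x. N (f x) = g x" unfolding N_def using Nf_eq[OF hf nc hg A] .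
  have Nd: "\<And>x. N field_differentiable at (f x)" unfolding N_def using Nf_hol[OF hf nc hg A] .
  have NR: "N holomorphic_on R"
    unfolding holomorphic_on_def R_def using Nd field_differentiable_at_within by blast
  define H where "H = (\<lambda>z. deriv N (f z))"
  have H1: "H holomorphic_on UNIV"
    unfolding H_def by (rule holomorphic_deriv_compose[OF NR hf _ oR]) (auto simp: R_def)
  have H2: "deriv g z = H z * deriv f z" for z
  proof -
    have "(N has_field_derivative deriv N (f z)) (at (f z))"
      using Nd DERIV_deriv_iff_field_differentiable by blast
    moreover have "(f has_field_derivative deriv f z) (at z)"
      using hf DERIV_deriv_iff_field_differentiable holomorphic_on_imp_differentiable_at by blast
    ultimately have "(N \<circ> f has_field_derivative deriv N (f z) * deriv f z) (at z)"
      by (rule DERIV_chain)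
    moreover have "N \<circ> f = g" using Neq by auto
    ultimately show ?thesis unfolding H_def by (simp add: DERIV_imp_deriv)
  qed
  define K where "K = (\<lambda>v u. if u = v then deriv N v else (N u - N v) / (u - v))"
  have Khol: "K v holomorphic_on R" if "v \<in> R" for v
    unfolding K_def using pole_lemma[OF NR, of v] that oR by (simp add: interior_open)
  have Ksym: "K v u = K u v" for u v
    unfolding K_def by (auto simp: divide_simps) (auto simp: algebra_simps)
  define G where "G = (\<lambda>w z. K (f z) (f w))"
  have G1: "(\<lambda>w. G w z) holomorphic_on UNIV" for z
  proof -
    have "(K (f z) \<circ> f) holomorphic_on UNIV"
      by (rule holomorphic_on_compose_gen[OF hf Khol]) (auto simp: R_def)
    then show ?thesis unfolding G_def by (simp add: comp_def)
  qed
  have G2: "(\<lambda>z. G w z) holomorphic_on UNIV" for w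
  proof -
    have "(K (f w) \<circ> f) holomorphic_on UNIV"
      by (rule holomorphic_on_compose_gen[OF hf Khol]) (auto simp: R_def)
    then show ?thesis unfolding G_def comp_def by (subst Ksym) simp
  qed
  have G3: "g w - g z = (f w - f z) * G w z" for w z
  proof (cases "f w = f z")
    case True
    then have "g w = g z" using Neq by metis
    then show ?thesis using True by simp
  next
    case False
    then show ?thesis unfolding G_def K_def using Neq[of w, symmetric] Neq[of z, symmetric] by simp
  qed
  show ?thesis
  proof (intro conjI exI[of _ H] exI[of _ G] allI ballI)
    show "H holomorphic_on UNIV" by (rule H1)
  qed (use H2 G1 G3 holomorphic_on_subset[OF G2] in auto)
qed

end
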